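(* Let $G$ be a connected chordal graph and $X\subseteq V(G)$ a vertex subset such that $G[X]$ is connected. Then there is a bijection $f$ from the set of connected components of $G[N_G(X)]$ to the set of connected components of $G-X$ such that a connected component $C$ of $G[N_G(X)]$ is contained in a connected component $H$ of $G-X$ if and only if $H=f(C)$.
   Context: A graph is chordal if it has no induced cycle of length at least $4$. For $X\subseteq V(G)$, $N_G(X)=(\bigcup_{v\in X}N_G(v))\setminus X$. *)

theory Defs
  imports Main
begin

definition graph :: "'a set \<Rightarrow> ('a \<Rightarrow> 'a \<Rightarrow> bool) \<Rightarrow> bool" where
  "graph V E \<longleftrightarrow> finite V \<and> (\<forall>u v. E u v \<longrightarrow> u \<in> V \<and> v \<in> V)
     \<and> (\<forall>u v. E u v \<longrightarrow> E v u) \<and> (\<forall>v. \<not> E v v)"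

definition reach_in :: "('a \<Rightarrow> 'a \<Rightarrow> bool) \<Rightarrow> 'a set \<Rightarrow> 'a \<Rightarrow> 'a \<Rightarrow> bool" where
  "reach_in E S = (\<lambda>u v. E u v \<and> u \<in> S \<and> v \<in> S)\<^sup>*\<^sup>*"

definition connected_in :: "('a \<Rightarrow> 'a \<Rightarrow> bool) \<Rightarrow> 'a set \<Rightarrow> bool" where
  "connected_in E S \<longleftrightarrow> S \<noteq> {} \<and> (\<forall>u\<in>S. \<forall>v\<in>S. reach_in E S u v)"

definition components :: "('a \<Rightarrow> 'a \<Rightarrow> bool) \<Rightarrow> 'a set \<Rightarrow> 'a set set" where
  "components E S = {C. C \<subseteq> S \<and> connected_in E C
      \<and> (\<forall>D. C \<subseteq> D \<and> D \<subseteq> S \<and> connected_in E D \<longrightarrow> D = C)}"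

definition nbhd :: "'a set \<Rightarrow> ('a \<Rightarrow> 'a \<Rightarrow> bool) \<Rightarrow> 'a set \<Rightarrow> 'a set" where
  "nbhd V E X = {v \<in> V. \<exists>x\<in>X. E x v} - X"

definition induced_cycle :: "'a set \<Rightarrow> ('a \<Rightarrow> 'a \<Rightarrow> bool) \<Rightarrow> 'a list \<Rightarrow> bool" where
  "induced_cycle V E vs \<longleftrightarrow> length vs \<ge> 4 \<and> distinct vs \<and> set vs \<subseteq> V
     \<and> (\<forall>i < length vs. E (vs ! i) (vs ! ((i + 1) mod length vs)))
     \<and> (\<forall>i < length vs. \<forall>j < length vs. E (vs ! i) (vs ! j) \<longrightarrow>
           j = (i + 1) mod length vs \<or> i = (j + 1) mod length vs)"

definition chordal :: "'a set \<Rightarrow> ('a \<Rightarrow> 'a \<Rightarrow> bool) \<Rightarrow> bool" where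
  "chordal V E \<longleftrightarrow> \<not> (\<exists>vs. induced_cycle V E vs)"

end

theory Submission
  imports Defs
begin

lemma reach_mono: "S \<subseteq> T \<Longrightarrow> reach_in E S a b \<Longrightarrow> reach_in E T a b"
  unfolding reach_in_def
  by (erule rtranclp_mono[THEN predicate2D, rotated]) auto

lemma reach_step: "reach_in E S a b \<Longrightarrow> E b c \<Longrightarrow> b \<in> S \<Longrightarrow> c \<in> S \<Longrightarrow> reach_in E S a c"
  unfolding reach_in_def by (rule rtranclp.rtrancl_into_rtrancl) auto

lemma reach_refl: "reach_in E S a a"
  unfolding reach_in_def by simp

lemma reach_trans: "reach_in E S a b \<Longrightarrow> reach_in E S b c \<Longrightarrow> reach_in E S a c"
  unfolding reach_in_def by (rule rtranclp_trans)

lemma reach_edge: "E a b \<Longrightarrow> a \<in> S \<Longrightarrow> b \<in> S \<Longrightarrow> reach_in E S a b"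
  unfolding reach_in_def by auto

lemma reach_in_S: "reach_in E S u v \<Longrightarrow> u = v \<or> (u \<in> S \<and> v \<in> S)"
  unfolding reach_in_def by (induction rule: rtranclp_induct) auto

lemma reach_sym:
  assumes sym: "\<forall>a b. E a b \<longrightarrow> E b a" and "reach_in E S u v"
  shows "reach_in E S v u"
  using assms(2) unfolding reach_in_def
proof (induction rule: rtranclp_induct)
  case base thus ?case by simp
next
  case (step y z)
  have r: "(\<lambda>u v. E u v \<and> u \<in> S \<and> v \<in> S) z y" using sym step(2) by simp
  show ?case by (rule converse_rtranclp_into_rtranclp[OF r step(3)])
qed

lemma reach_class:
  assumes sym: "\<forall>a b. E a b \<longrightarrow> E b a" and "reach_in E S a b"
  shows "{v. reach_in E S a v} = {v. reach_in E S b v}"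
proof -
  have ba: "reach_in E S b a" using reach_sym[OF sym assms(2)] .
  show ?thesis
  proof (rule set_eqI)
    fix v show "v \<in> {v. reach_in E S a v} \<longleftrightarrow> v \<in> {v. reach_in E S b v}"
      using reach_trans[OF ba, of v] reach_trans[OF assms(2), of v] by blast
  qed
qed

lemma R_conn:
  assumes sym: "\<forall>a b. E a b \<longrightarrow> E b a" and u: "u \<in> S"
  shows "connected_in E {v. reach_in E S u v}"
proof -
  let ?R = "{v. reach_in E S u v}"
  have 1: "reach_in E ?R u a" if "reach_in E S u a" for a
    using that unfolding reach_in_def
  proof (induction rule: rtranclp_induct)
    case base thus ?case by simp
  next
    case (step y z)
    have yR: "reach_in E S u y" using step(1) unfolding reach_in_def by simp
    have zR: "reach_in E S u z" using rtranclp.rtrancl_into_rtrancl[OF step(1) step(2)]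
      unfolding reach_in_def by simp
    show ?case by (rule rtranclp.rtrancl_into_rtrancl[OF step(3)]) (use yR zR step(2) in \<open>simp add: reach_in_def\<close>)
  qed
  show ?thesis unfolding connected_in_def
  proof (intro conjI ballI)
    have "u \<in> ?R" using reach_refl[of E S u] by simp
    thus "?R \<noteq> {}" by auto
  next
    fix a b assume "a \<in> ?R" "b \<in> ?R"
    hence "reach_in E ?R u a" "reach_in E ?R u b" using 1 by auto
    thus "reach_in E ?R a b" using reach_sym[OF sym, of ?R u a] reach_trans[of E ?R a u b] by simp
  qed
qed

lemma comps_char:
  assumes sym: "\<forall>a b. E a b \<longrightarrow> E b a"
  shows "components E S = (\<lambda>u. {v. reach_in E S u v}) ` S"
proof
  show "components E S \<subseteq> (\<lambda>u. {v. reach_in E S u v}) ` S"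
  proof
    fix C assume C: "C \<in> components E S"
    hence CS: "C \<subseteq> S" and cc: "connected_in E C"
      and mx: "\<And>D. C \<subseteq> D \<Longrightarrow> D \<subseteq> S \<Longrightarrow> connected_in E D \<Longrightarrow> D = C"
      unfolding components_def by auto
    obtain u where u: "u \<in> C" using cc unfolding connected_in_def by auto
    have uS: "u \<in> S" using u CS by (rule subsetD[rotated])
    have "C \<subseteq> {v. reach_in E S u v}"
    proof
      fix v assume "v \<in> C"
      hence "reach_in E C u v" using cc u unfolding connected_in_def by simp
      thus "v \<in> {v. reach_in E S u v}" using reach_mono[OF CS] by simp
    qed
    moreover have "{v. reach_in E S u v} \<subseteq> S"
    proof
      fix v assume "v \<in> {v. reach_in E S u v}"
      hence "u = v \<or> (u \<in> S \<and> v \<in> S)" using reach_in_S[of E S u v] by simp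
      thus "v \<in> S" using uS by auto
    qed
    ultimately have "{v. reach_in E S u v} = C"
      using mx R_conn[OF sym uS] by simp
    thus "C \<in> (\<lambda>u. {v. reach_in E S u v}) ` S" using uS by (intro image_eqI[of _ _ u]) simp_all
  qed
next
  show "(\<lambda>u. {v. reach_in E S u v}) ` S \<subseteq> components E S"
  proof
    fix C assume "C \<in> (\<lambda>u. {v. reach_in E S u v}) ` S"
    then obtain u where u: "u \<in> S" and C: "C = {v. reach_in E S u v}" by auto
    have "C \<subseteq> S"
    proof
      fix v assume "v \<in> C"
      hence "u = v \<or> (u \<in> S \<and> v \<in> S)" using reach_in_S[of E S u v] C by simp
      thus "v \<in> S" using u by auto
    qed
    moreover have "connected_in E C" using R_conn[OF sym u] C by simp
    moreover have "D = C" if D: "C \<subseteq> D" "D \<subseteq> S" "connected_in E D" for D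
    proof -
      have "u \<in> C" using C reach_refl[of E S u] by simp
      hence uD: "u \<in> D" using D(1) by (rule subsetD[rotated])
      have "D \<subseteq> C"
      proof
        fix v assume "v \<in> D"
        hence "reach_in E D u v" using D(3) uD unfolding connected_in_def by simp
        thus "v \<in> C" using reach_mono[OF D(2)] C by simp
      qed
      thus ?thesis using D(1) by (rule subset_antisym)
    qed
    ultimately show "C \<in> components E S" unfolding components_def by blast
  qed
qed

definition walk :: "('a \<Rightarrow> 'a \<Rightarrow> bool) \<Rightarrow> 'a set \<Rightarrow> 'a list \<Rightarrow> bool" where
  "walk E S p \<longleftrightarrow> p \<noteq> [] \<and> set p \<subseteq> S \<and> (\<forall>i. Suc i < length p \<longrightarrow> E (p!i) (p!Suc i))"

lemma reach_walk:
  assumes "reach_in E S u v" "u \<in> S"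
  shows "\<exists>p. walk E S p \<and> hd p = u \<and> last p = v"
  using assms(1) unfolding reach_in_def
proof (induction rule: rtranclp_induct)
  case base thus ?case using assms(2) by (intro exI[of _ "[u]"]) (auto simp: walk_def)
next
  case (step y z)
  then obtain p where p: "walk E S p" "hd p = u" "last p = y" by auto
  have "walk E S (p @ [z])" using p step(2) unfolding walk_def
    apply (auto simp: nth_append last_conv_nth less_Suc_eq)
    subgoal for i by (subgoal_tac "i = length p - Suc 0") auto
    done
  thus ?case using p by (intro exI[of _ "p @ [z]"]) (auto simp: walk_def)
qed

lemma nth_cut:
  assumes "a \<le> j" "j \<le> length p" "l < a + (length p - j)"
  shows "(take a p @ drop j p) ! l = (if l < a then p!l else p!(l - a + j))"
  using assms by (auto simp: nth_append min_def) (metis add.commute)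

lemma walk_cut:
  assumes w: "walk E S p" and aj: "a \<le> j" and jl: "j < length p"
    and mid: "0 < a \<Longrightarrow> E (p!(a - 1)) (p!j)"
  shows "walk E S (take a p @ drop j p)"
proof -
  let ?q = "take a p @ drop j p"
  have len: "length ?q = a + (length p - j)" using aj jl by simp
  have nq: "?q ! l = (if l < a then p!l else p!(l - a + j))" if "l < length ?q" for l
    using nth_cut[of a j p l] that aj jl len by simp
  have "set ?q \<subseteq> set p" using set_take_subset set_drop_subset by fastforce
  moreover have "?q \<noteq> []" using jl by simp
  moreover have "E (?q!l) (?q!Suc l)" if l: "Suc l < length ?q" for l
  proof -
    consider "Suc l < a" | "Suc l = a" | "a \<le> l" by linarith
    thus ?thesis
    proof cases
      case 1
      have "Suc l < length p" using 1 aj jl by simp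
      thus ?thesis using nq[of l] nq[of "Suc l"] l w 1 unfolding walk_def
        by (simp add: len)
    next
      case 2
      have la: "l = a - 1" using 2 by simp
      have "0 < a" using 2 by simp
      thus ?thesis using nq[of l] nq[of "Suc l"] l mid la 2 by (simp add: len)
    next
      case 3
      have "Suc (l - a + j) < length p" using l len 3 by linarith
      moreover have "Suc l - a + j = Suc (l - a + j)" using 3 by simp
      ultimately show ?thesis using nq[of l] nq[of "Suc l"] l w 3 unfolding walk_def
        by simp
    qed
  qed
  ultimately show ?thesis using w unfolding walk_def by auto
qed

lemma walk_cut_hd_last:
  assumes "a \<le> j" "j < length p"
  shows "last (take a p @ drop j p) = last p" "0 < a \<Longrightarrow> hd (take a p @ drop j p) = hd p"
    "length (take a p @ drop j p) = a + (length p - j)"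
  using assms by (auto simp: hd_append)

lemma walk_take: "walk E S p \<Longrightarrow> l < length p \<Longrightarrow> walk E S (take (Suc l) p)"
  unfolding walk_def by (auto dest: in_set_takeD)

lemma walk_drop: "walk E S p \<Longrightarrow> l < length p \<Longrightarrow> walk E S (drop l p)"
  unfolding walk_def by (auto dest: in_set_dropD)

lemma walk_mono: "walk E S p \<Longrightarrow> S \<subseteq> T \<Longrightarrow> walk E T p"
  unfolding walk_def by auto

lemma shortest_walk:
  assumes sym: "\<forall>a b. E a b \<longrightarrow> E b a" and irr: "\<forall>v. \<not> E v v"
    and w: "walk E S p"
    and mn: "\<And>p'. walk E S p' \<Longrightarrow> hd p' = hd p \<Longrightarrow> last p' = last p \<Longrightarrow> length p \<le> length p'"
  shows "distinct p"
    and "\<And>i j. i < length p \<Longrightarrow> j < length p \<Longrightarrow> E (p!i) (p!j) \<Longrightarrow> j = Suc i \<or> i = Suc j"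
proof -
  have neq: "p!i \<noteq> p!j" if ij: "i < j" "j < length p" for i j
  proof
    assume eq: "p!i = p!j"
    have mid: "0 < i \<Longrightarrow> E (p!(i - 1)) (p!j)"
    proof -
      assume "0 < i"
      have s: "Suc (i-1) = i" using \<open>0 < i\<close> by simp
      have "Suc (i-1) < length p" using s ij by simp
      hence "E (p!(i-1)) (p!Suc(i-1))" using w unfolding walk_def by blast
      thus ?thesis by (metis s eq)
    qed
    have w': "walk E S (take i p @ drop j p)" using walk_cut[OF w _ ij(2) mid] ij by simp
    have "hd (take i p @ drop j p) = hd p"
    proof (cases "i = 0")
      case True thus ?thesis using eq ij w unfolding walk_def by (simp add: hd_drop_conv_nth hd_conv_nth)
    next
      case False thus ?thesis using walk_cut_hd_last(2)[of i j p] ij by simp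
    qed
    moreover have "last (take i p @ drop j p) = last p" using walk_cut_hd_last(1)[of i j p] ij by simp
    ultimately have "length p \<le> length (take i p @ drop j p)" using mn w' by blast
    thus False using ij by simp
  qed
  show "distinct p" unfolding distinct_conv_nth
    by (metis neq linorder_neqE_nat)
  have ind: "j = Suc i" if ij: "i < j" "j < length p" "E (p!i) (p!j)" for i j
  proof (rule ccontr)
    assume "j \<noteq> Suc i"
    hence "Suc i \<le> j" using ij by simp
    have w': "walk E S (take (Suc i) p @ drop j p)" using walk_cut[OF w \<open>Suc i \<le> j\<close> ij(2)] ij by simp
    have "hd (take (Suc i) p @ drop j p) = hd p" "last (take (Suc i) p @ drop j p) = last p"
      using walk_cut_hd_last[of "Suc i" j p] ij \<open>Suc i \<le> j\<close> by auto
    hence "length p \<le> length (take (Suc i) p @ drop j p)" using mn w' by blast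
    thus False using ij \<open>j \<noteq> Suc i\<close> \<open>Suc i \<le> j\<close> by simp
  qed
  fix i j assume "i < length p" "j < length p" "E (p!i) (p!j)"
  thus "j = Suc i \<or> i = Suc j" using ind sym irr by (metis linorder_neqE_nat)
qed

lemma glue_cycle:
  assumes sym: "\<forall>a b. E a b \<longrightarrow> E b a" and irr: "\<forall>v. \<not> E v v"
    and pd: "distinct p" and pl: "3 \<le> length p"
    and pc: "\<And>i. Suc i < length p \<Longrightarrow> E (p!i) (p!Suc i)"
    and pind: "\<And>i j. i < length p \<Longrightarrow> j < length p \<Longrightarrow> E (p!i) (p!j) \<Longrightarrow> j = Suc i \<or> i = Suc j"
    and qd: "distinct q" and ql: "3 \<le> length q"
    and qc: "\<And>i. Suc i < length q \<Longrightarrow> E (q!i) (q!Suc i)"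
    and qind: "\<And>i j. i < length q \<Longrightarrow> j < length q \<Longrightarrow> E (q!i) (q!j) \<Longrightarrow> j = Suc i \<or> i = Suc j"
    and q0: "q!0 = p!(length p - 1)" and qlast: "q!(length q - 1) = p!0"
    and disj: "\<And>l. 0 < l \<Longrightarrow> l < length q - 1 \<Longrightarrow> q!l \<notin> set p"
    and noE: "\<And>i l. 0 < i \<Longrightarrow> i < length p - 1 \<Longrightarrow> 0 < l \<Longrightarrow> l < length q - 1 \<Longrightarrow> \<not> E (p!i) (q!l)"
    and pV: "set p \<subseteq> V" and qV: "set q \<subseteq> V"
  shows "induced_cycle V E (p @ butlast (tl q))"
proof -
  define m where "m = length p"
  define k where "k = length q"
  define vs where "vs = p @ butlast (tl q)"
  define n where "n = length vs"
  have n: "n = m + (k - 2)" unfolding n_def vs_def m_def k_def by simp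
  have nbt: "butlast (tl q) ! l = q ! Suc l" if "l < k - 2" for l
    using that unfolding k_def by (simp add: nth_butlast nth_tl)
  have nv: "vs!i = (if i < m then p!i else q!(i - m + 1))" if "i < n" for i
    using that nbt[of "i - m"] unfolding vs_def m_def n by (auto simp: nth_append)
  have dist: "distinct vs"
  proof -
    have "distinct (butlast (tl q))" using qd by (simp add: distinct_butlast distinct_tl)
    moreover have "set p \<inter> set (butlast (tl q)) = {}"
    proof (rule ccontr)
      assume "set p \<inter> set (butlast (tl q)) \<noteq> {}"
      then obtain x where x: "x \<in> set p" "x \<in> set (butlast (tl q))" by blast
      then obtain l where l: "l < length (butlast (tl q))" "x = butlast (tl q) ! l"
        by (metis in_set_conv_nth)
      have "l < k - 2" using l unfolding k_def by simp
      hence "x = q ! Suc l" using nbt l by simp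
      thus False using disj[of "Suc l"] x \<open>l < k - 2\<close> unfolding k_def by simp
    qed
    ultimately show ?thesis using pd unfolding vs_def by simp
  qed
  have setv: "set vs \<subseteq> V" using pV qV unfolding vs_def
    by (auto dest!: in_set_butlastD simp: list.set_sel(2) split: if_splits)
       (metis list.sel(2) list.set_sel(2) subsetD)
  have len: "4 \<le> n" using pl ql unfolding n m_def k_def by simp
  have cons: "E (vs!i) (vs!((i+1) mod n))" if i: "i < n" for i
  proof -
    consider "Suc i < m" | "Suc i = m" | "m \<le> i" "Suc i < n" | "Suc i = n" using i by linarith
    thus ?thesis
    proof cases
      case 1
      have "Suc i < n" using 1 n by simp
      hence "(i+1) mod n = Suc i" by simp
      thus ?thesis using nv[of i] nv[of "Suc i"] pc[of i] i 1 \<open>Suc i < n\<close> unfolding m_def by simp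
    next
      case 2
      have im: "i = length p - 1" using 2 unfolding m_def by simp
      have "vs!i = q!0" using nv[of i] 2 q0 i im unfolding m_def by simp
      moreover have "2 < k" using ql unfolding k_def by simp
      moreover have "vs!(Suc i) = q!1" using nv[of "Suc i"] 2 len n \<open>2 < k\<close> by simp
      moreover have "(i+1) mod n = Suc i" using 2 len n \<open>2 < k\<close> by simp
      ultimately show ?thesis using qc[of 0] ql by simp
    next
      case 3
      have "vs!i = q!(i - m + 1)" using nv[of i] 3 by simp
      moreover have "Suc i - m = Suc (i - m)" using 3 by (simp add: Suc_diff_le)
      hence "vs!(Suc i) = q!(Suc (i - m + 1))" using nv[of "Suc i"] 3 by simp
      moreover have "(i+1) mod n = Suc i" using 3 by simp
      moreover have "Suc (i - m + 1) < k" using 3 n by linarith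
      ultimately show ?thesis using qc[of "i - m + 1"] unfolding k_def by simp
    next
      case 4
      have "2 < k" "2 < m" using ql pl unfolding k_def m_def by simp_all
      hence "\<not> i < m" "Suc (i - m) = k - 2" using 4 n by linarith+
      hence "vs!i = q!(k - 2)" using nv[of i] 4 n len by simp
      moreover have "p \<noteq> []" using pl by auto
      moreover have "vs!0 = q!(k-1)" using nv[of 0] len pl qlast \<open>p \<noteq> []\<close> unfolding m_def k_def by simp
      moreover have "(i+1) mod n = 0" using 4 by simp
      moreover have "Suc (k - 2) = k - 1" using ql unfolding k_def by simp
      ultimately show ?thesis using qc[of "k - 2"] ql unfolding k_def by simp
    qed
  qed
  have key: "j = Suc i \<or> (i = 0 \<and> j = n - 1)"
    if ij: "i < j" "j < n" "E (vs!i) (vs!j)" for i j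
  proof -
    consider "j < m" | "i < m" "m \<le> j" | "m \<le> i" using ij by linarith
    thus ?thesis
    proof cases
      case 1 thus ?thesis using nv[of i] nv[of j] ij pind[of i j] unfolding m_def by simp
    next
      case 2
      define l where "l = j - m + 1"
      have l: "0 < l" "l < k - 1" "vs!j = q!l" using 2 ij n nv[of j] unfolding l_def by auto
      have vi: "vs!i = p!i" using nv[of i] 2 ij by simp
      consider "i = 0" | "0 < i" "i < m - 1" | "i = m - 1" using 2 by linarith
      thus ?thesis
      proof cases
        case 1
        have "E (q!(k-1)) (q!l)" using ij l vi 1 qlast unfolding k_def by simp
        hence "k - 1 = Suc l" using qind[of "k-1" l] l ql unfolding k_def by auto
        hence "j = n - 1" using l_def 2 n by linarith
        thus ?thesis using 1 by simp
      next
        case 3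
        have "E (q!0) (q!l)" using ij l vi 3 q0 unfolding m_def by simp
        moreover have "l < length q" "q \<noteq> []" using l ql unfolding k_def by auto
        ultimately have "l = 1" using qind[of 0 l] l by auto
        thus ?thesis using 3 l_def 2 by simp
      next
        case 4: 2
        thus ?thesis using noE[of i l] l vi ij unfolding m_def k_def by simp
      qed
    next
      case 3
      have "E (q!(i - m + 1)) (q!(j - m + 1))" using nv[of i] nv[of j] ij 3 by simp
      moreover have "j - m + 1 < k" "i - m + 1 < k" using ij n 3 by linarith+
      ultimately have "j - m + 1 = Suc (i - m + 1)" using qind[of "i - m + 1" "j - m + 1"] ij 3
        unfolding k_def by auto
      hence "j = Suc i" using 3 ij by linarith
      thus ?thesis by simp
    qed
  qed
  have ind: "j = (i + 1) mod n \<or> i = (j + 1) mod n"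
    if ij: "i < n" "j < n" "E (vs!i) (vs!j)" for i j
  proof -
    consider "i < j" | "i = j" | "j < i" by linarith
    thus ?thesis
    proof cases
      case 1 thus ?thesis using key[of i j] ij len by auto
    next
      case 2 thus ?thesis using ij irr by simp
    next
      case 3
      have "E (vs!j) (vs!i)" using ij sym by blast
      thus ?thesis using key[of j i] ij len 3 by auto
    qed
  qed
  show ?thesis unfolding induced_cycle_def
    using len dist setv cons ind unfolding n_def vs_def by blast
qed

lemma key_reach:
  assumes g: "graph V E" and ch: "chordal V E" and XV: "X \<subseteq> V" and cX: "connected_in E X"
    and u: "u \<in> nbhd V E X" and w: "w \<in> nbhd V E X" and r: "reach_in E (V - X) u w"
  shows "reach_in E (nbhd V E X) u w"
proof (rule ccontr)
  assume nr: "\<not> reach_in E (nbhd V E X) u w"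
  define N where "N = nbhd V E X"
  have sym: "\<forall>a b. E a b \<longrightarrow> E b a" and irr: "\<forall>v. \<not> E v v" and EV: "\<forall>a b. E a b \<longrightarrow> a \<in> V \<and> b \<in> V"
    using g unfolding graph_def by auto
  have NVX: "N \<subseteq> V - X" unfolding N_def nbhd_def by auto
  have inN: "v \<in> N" if "v \<in> V - X" "x \<in> X" "E x v" for v x
    using that unfolding N_def nbhd_def by auto
  define Q where "Q = {p. walk E (V - X) p \<and> hd p \<in> N \<and> last p \<in> N \<and> \<not> reach_in E N (hd p) (last p)}"
  obtain p0 where "walk E (V - X) p0" "hd p0 = u" "last p0 = w"
    using reach_walk[OF r] u NVX unfolding N_def by blast
  hence "p0 \<in> Q" using u w nr unfolding Q_def N_def by simp
  then obtain p where pQ: "p \<in> Q" and pmin: "\<And>p'. p' \<in> Q \<Longrightarrow> length p \<le> length p'"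
    using ex_has_least_nat[of "\<lambda>p. p \<in> Q" p0 length] by blast
  have pw: "walk E (V - X) p" and ha: "hd p \<in> N" and lb: "last p \<in> N"
    and pnr: "\<not> reach_in E N (hd p) (last p)" using pQ unfolding Q_def by auto
  have pmin': "length p \<le> length p'" if "walk E (V - X) p'" "hd p' = hd p" "last p' = last p" for p'
    using pmin[of p'] that ha lb pnr unfolding Q_def by simp
  note ps = shortest_walk[OF sym irr pw pmin']
  have pne: "p \<noteq> []" using pw unfolding walk_def by simp
  have hdp: "hd p = p!0" and lastp: "last p = p!(length p - 1)" using pne by (auto simp: hd_conv_nth last_conv_nth)
  have pc: "E (p!i) (p!Suc i)" if "Suc i < length p" for i using pw that unfolding walk_def by auto
  have pl: "3 \<le> length p"
  proof (rule ccontr)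
    assume "\<not> 3 \<le> length p"
    moreover have "0 < length p" using pne by simp
    ultimately have "length p = 1 \<or> length p = 2" by linarith
    thus False
    proof
      assume "length p = 1"
      hence "hd p = last p" using hdp lastp by simp
      thus False using pnr reach_refl by metis
    next
      assume l2: "length p = 2"
      hence "E (hd p) (last p)" using pc[of 0] hdp lastp by simp
      thus False using pnr reach_edge ha lb by metis
    qed
  qed
  have pint: "p!l \<notin> N" if l: "0 < l" "l < length p - 1" for l
  proof
    assume pl: "p!l \<in> N"
    show False
    proof (cases "reach_in E N (hd p) (p!l)")
      case True
      hence nr2: "\<not> reach_in E N (p!l) (last p)" using pnr reach_trans by metis
      have "drop l p \<in> Q" using walk_drop[OF pw, of l] l pl lb nr2 unfolding Q_def
        by (simp add: hd_drop_conv_nth)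
      thus False using pmin[of "drop l p"] l by simp
    next
      case False
      have "hd (take (Suc l) p) = hd p" "last (take (Suc l) p) = p!l"
        using l pne by (auto simp: hd_conv_nth last_conv_nth)
      hence "take (Suc l) p \<in> Q" using walk_take[OF pw, of l] l pl ha False unfolding Q_def
        by simp
      thus False using pmin[of "take (Suc l) p"] l by simp
    qed
  qed
  define a where "a = hd p"
  define b where "b = last p"
  have ab: "a \<noteq> b" using ps(1) pl pne hdp lastp nth_eq_iff_index_eq[of p 0 "length p - 1"]
    unfolding a_def b_def by simp
  obtain x1 where x1: "x1 \<in> X" "E x1 a" using ha NVX unfolding a_def N_def nbhd_def by auto
  obtain x2 where x2: "x2 \<in> X" "E x2 b" using lb NVX unfolding b_def N_def nbhd_def by auto
  define T where "T = X \<union> {a, b}"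
  have aT: "a \<in> T" and bT: "b \<in> T" and XT: "X \<subseteq> T" unfolding T_def by auto
  have "reach_in E T b a"
  proof -
    have "reach_in E T b x2" using reach_edge[of E b x2 T] x2 sym bT XT by blast
    moreover have "reach_in E T x2 x1" using reach_mono[OF XT] cX x1 x2 unfolding connected_in_def by blast
    moreover have "reach_in E T x1 a" using reach_edge[of E x1 a T] x1 aT XT by blast
    ultimately show ?thesis using reach_trans by metis
  qed
  then obtain q0 where "walk E T q0" "hd q0 = b" "last q0 = a" using reach_walk bT by metis
  then obtain q where qw: "walk E T q" and qh: "hd q = b" and ql: "last q = a"
    and qmin: "\<And>q'. walk E T q' \<and> hd q' = b \<and> last q' = a \<Longrightarrow> length q \<le> length q'"
    using ex_has_least_nat[of "\<lambda>q. walk E T q \<and> hd q = b \<and> last q = a" q0 length] by blast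
  note qs = shortest_walk[OF sym irr qw, of ] 
  have qs1: "distinct q" using shortest_walk(1)[OF sym irr qw] qmin qh ql by metis
  have qs2: "\<And>i j. i < length q \<Longrightarrow> j < length q \<Longrightarrow> E (q!i) (q!j) \<Longrightarrow> j = Suc i \<or> i = Suc j"
    using shortest_walk(2)[OF sym irr qw] qmin qh ql by metis
  have qne: "q \<noteq> []" using qw unfolding walk_def by simp
  have hdq: "hd q = q!0" and lastq: "last q = q!(length q - 1)" using qne by (auto simp: hd_conv_nth last_conv_nth)
  have qc: "E (q!i) (q!Suc i)" if "Suc i < length q" for i using qw that unfolding walk_def by auto
  have qlen: "3 \<le> length q"
  proof (rule ccontr)
    assume "\<not> 3 \<le> length q"
    moreover have "0 < length q" using qne by simp
    ultimately have "length q = 1 \<or> length q = 2" by linarith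
    thus False
    proof
      assume "length q = 1" thus False using ab qh ql hdq lastq by simp
    next
      assume l2: "length q = 2"
      hence "E b a" using qc[of 0] hdq lastq qh ql by simp
      hence "E a b" using sym by blast
      thus False using pnr reach_edge ha lb unfolding a_def b_def by metis
    qed
  qed
  have qint: "q!l \<in> X" if l: "0 < l" "l < length q - 1" for l
  proof -
    have "q!l \<in> T" using qw l unfolding walk_def by auto
    moreover have "q!l \<noteq> b" using qs1 l qh hdq qne nth_eq_iff_index_eq[of q l 0] by simp
    moreover have "q!l \<noteq> a" using qs1 l ql lastq qne nth_eq_iff_index_eq[of q l "length q - 1"] by simp
    ultimately show ?thesis unfolding T_def by auto
  qed
  have pV: "set p \<subseteq> V - X" using pw unfolding walk_def by auto
  have qV: "set q \<subseteq> V" using qw XV ha lb NVX unfolding walk_def T_def a_def b_def by auto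
  have "induced_cycle V E (p @ butlast (tl q))"
  proof (rule glue_cycle[OF sym irr ps(1) pl pc ps(2) qs1 qlen qc qs2])
    show "q!0 = p!(length p - 1)" using qh hdq lastp b_def by simp
    show "q!(length q - 1) = p!0" using ql lastq hdp a_def by simp
    show "\<And>l. 0 < l \<Longrightarrow> l < length q - 1 \<Longrightarrow> q!l \<notin> set p" using qint pV by blast
    show "\<And>i l. 0 < i \<Longrightarrow> i < length p - 1 \<Longrightarrow> 0 < l \<Longrightarrow> l < length q - 1 \<Longrightarrow> \<not> E (p!i) (q!l)"
    proof
      fix i l assume il: "0 < i" "i < length p - 1" "0 < l" "l < length q - 1" and e: "E (p!i) (q!l)"
      have "i < length p" using il by simp
      hence "p!i \<in> V - X" using pV nth_mem[of i p] by blast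
      thus False using inN[of "p!i" "q!l"] qint[OF il(3,4)] e sym pint[OF il(1,2)] by blast
    qed
    show "set p \<subseteq> V" using pV by blast
    show "set q \<subseteq> V" using qV .
  qed
  thus False using ch unfolding chordal_def by blast
qed

theorem lemma2p1:
  fixes V :: "'a set" and E :: "'a \<Rightarrow> 'a \<Rightarrow> bool" and X :: "'a set"
  assumes "graph V E" and "connected_in E V" and "chordal V E"
    and "X \<subseteq> V" and "connected_in E X"
  shows "\<exists>f. bij_betw f (components E (nbhd V E X)) (components E (V - X))
           \<and> (\<forall>C \<in> components E (nbhd V E X). \<forall>H \<in> components E (V - X).
                 C \<subseteq> H \<longleftrightarrow> H = f C)"
proof -
  note g = assms(1) and cV = assms(2) and ch = assms(3) and XV = assms(4) and cX = assms(5)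
  have sym: "\<forall>a b. E a b \<longrightarrow> E b a" using g unfolding graph_def by auto
  define N where "N = nbhd V E X"
  have NVX: "N \<subseteq> V - X" unfolding N_def nbhd_def by auto
  have inN: "v \<in> N" if "v \<in> V - X" "x \<in> X" "E x v" for v x
    using that unfolding N_def nbhd_def by auto
  define R where "R = (\<lambda>S u. {v. reach_in E S u v})"
  have cN: "components E N = R N ` N" unfolding R_def by (rule comps_char[OF sym])
  have cH: "components E (V - X) = R (V - X) ` (V - X)" unfolding R_def by (rule comps_char[OF sym])
  define f where "f C = {v. \<exists>c\<in>C. reach_in E (V - X) c v}" for C
  have fR: "f (R N u) = R (V - X) u" if "u \<in> N" for u
  proof
    show "f (R N u) \<subseteq> R (V - X) u"
    proof
      fix v assume "v \<in> f (R N u)"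
      then obtain c where c: "reach_in E N u c" "reach_in E (V - X) c v" unfolding f_def R_def by auto
      have "reach_in E (V - X) u c" using reach_mono[OF NVX c(1)] .
      thus "v \<in> R (V - X) u" using reach_trans[OF _ c(2)] unfolding R_def by simp
    qed
    show "R (V - X) u \<subseteq> f (R N u)"
    proof
      fix v assume "v \<in> R (V - X) u"
      moreover have "u \<in> R N u" using reach_refl[of E N u] unfolding R_def by simp
      ultimately show "v \<in> f (R N u)" unfolding f_def R_def by auto
    qed
  qed
  have Rcl: "R S a = R S b" if "reach_in E S a b" for S a b
    using reach_class[OF sym that] unfolding R_def by simp
  have surj: "\<exists>u\<in>N. reach_in E (V - X) h u" if h: "h \<in> V - X" for h
  proof -
    obtain x where x: "x \<in> X" using cX unfolding connected_in_def by auto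
    have hx: "reach_in E V h x" using cV h x XV unfolding connected_in_def by blast
    have claim: "(\<exists>u\<in>N. reach_in E (V - X) h u) \<or> reach_in E (V - X) h v"
      if "reach_in E V h v" for v
      using that[unfolded reach_in_def]
    proof (induction rule: rtranclp_induct)
      case base thus ?case using reach_refl by metis
    next
      case (step y z)
      show ?case
      proof (cases "(\<exists>u\<in>N. reach_in E (V - X) h u)")
        case True thus ?thesis by simp
      next
        case False
        hence ry: "reach_in E (V - X) h y" using step(3) unfolding reach_in_def by blast
        hence yV: "y \<in> V - X" using reach_in_S[OF ry] h by auto
        show ?thesis
        proof (cases "z \<in> X")
          case True
          hence "y \<in> N" using inN[OF yV True] sym step(2) by blast
          thus ?thesis using ry by blast
        next
          case False
          hence "z \<in> V - X" using step(2) by simp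
          thus ?thesis using reach_step[OF ry] step(2) yV by blast
        qed
      qed
    qed
    from claim[OF hx] show ?thesis
    proof
      assume "reach_in E (V - X) h x"
      thus ?thesis using reach_in_S[of E "V - X" h x] h x by auto
    qed
  qed
  have key: "reach_in E N u w" if "u \<in> N" "w \<in> N" "reach_in E (V - X) u w" for u w
    using key_reach[OF g ch XV cX] that unfolding N_def by blast
  have inj: "inj_on f (components E N)"
  proof (rule inj_onI)
    fix C1 C2 assume C1: "C1 \<in> components E N" and C2: "C2 \<in> components E N" and eq: "f C1 = f C2"
    obtain u where u: "u \<in> N" "C1 = R N u" using C1 cN by auto
    obtain w where w: "w \<in> N" "C2 = R N w" using C2 cN by auto
    have e1: "f C1 = R (V - X) u" unfolding u(2) by (rule fR[OF u(1)])
    have e2: "f C2 = R (V - X) w" unfolding w(2) by (rule fR[OF w(1)])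
    have eqR: "R (V - X) u = R (V - X) w" using e1 e2 eq by simp
    have "w \<in> R (V - X) w" using reach_refl[of E "V - X" w] unfolding R_def by simp
    hence "w \<in> R (V - X) u" using eqR by simp
    hence "reach_in E (V - X) u w" unfolding R_def by simp
    hence "reach_in E N u w" using key u(1) w(1) by blast
    hence "R N u = R N w" by (rule Rcl)
    thus "C1 = C2" using u(2) w(2) by simp
  qed
  have img: "f ` components E N = components E (V - X)"
  proof
    show "f ` components E N \<subseteq> components E (V - X)"
    proof
      fix H assume "H \<in> f ` components E N"
      then obtain C where C: "C \<in> components E N" "H = f C" by auto
      obtain u where u: "u \<in> N" "C = R N u" using C(1) cN by auto
      have "H = R (V - X) u" unfolding C(2) u(2) by (rule fR[OF u(1)])
      moreover have "u \<in> V - X" using u(1) NVX by blast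
      ultimately show "H \<in> components E (V - X)" unfolding cH by blast
    qed
    show "components E (V - X) \<subseteq> f ` components E N"
    proof
      fix H assume "H \<in> components E (V - X)"
      then obtain h where h: "h \<in> V - X" "H = R (V - X) h" using cH by auto
      obtain u where u: "u \<in> N" "reach_in E (V - X) h u" using surj[OF h(1)] by blast
      have "H = R (V - X) u" unfolding h(2) by (rule Rcl[OF u(2)])
      also have "\<dots> = f (R N u)" by (rule fR[OF u(1), THEN HOL.sym])
      finally have "H = f (R N u)" .
      moreover have "R N u \<in> components E N" unfolding cN using u(1) by blast
      ultimately show "H \<in> f ` components E N" by blast
    qed
  qed
  have iff: "C \<subseteq> H \<longleftrightarrow> H = f C" if C: "C \<in> components E N" and H: "H \<in> components E (V - X)" for C H
  proof -
    obtain u where u: "u \<in> N" "C = R N u" using C cN by auto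
    obtain h where h: "h \<in> V - X" "H = R (V - X) h" using H cH by auto
    show ?thesis
    proof
      assume "C \<subseteq> H"
      moreover have "u \<in> C" using u(2) reach_refl[of E N u] unfolding R_def by simp
      ultimately have "u \<in> H" by blast
      hence "reach_in E (V - X) h u" using h(2) unfolding R_def by simp
      hence "H = R (V - X) u" unfolding h(2) by (rule Rcl)
      also have "\<dots> = f C" unfolding u(2) by (rule fR[OF u(1), THEN HOL.sym])
      finally show "H = f C" .
    next
      assume "H = f C"
      hence HR: "H = R (V - X) u" unfolding u(2) using fR[OF u(1)] by simp
      show "C \<subseteq> H"
      proof
        fix v assume "v \<in> C"
        hence "reach_in E N u v" using u(2) unfolding R_def by simp
        hence "reach_in E (V - X) u v" by (rule reach_mono[OF NVX])
        thus "v \<in> H" using HR unfolding R_def by simp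
      qed
    qed
  qed
  show ?thesis unfolding N_def[symmetric]
    using inj img iff unfolding bij_betw_def by blast
qed

end
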